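(* Assume $\mu_*<1$. Then the probability measure $\wp$ on $\Omega_+$ is continuous, i.e. $\wp(\{\widehat\zeta^{(0)}\})=0$ for every point $\widehat\zeta^{(0)}\in\Omega_+$.
   Context: Model. Fix $d\ge1$. $(X_t,\xi_t)_{t\in\mathbb{Z}_+}$ is a Markov chain with $X_t\in\mathbb{Z}^d$, $X_0=0$, $\xi_t\in\Omega:=\{-1,+1\}^{\mathbb{Z}^d}$. Given $X_t=x,\xi_t=\bar\xi$, the next position and the next environment are conditionally independent; $P(X_{t+1}=x+u\mid X_t=x,\xi_t=\bar\xi)=P_0(u)+\epsilon c(u)\bar\xi(x)$, where $\epsilon>0$, $P_0$ is an even, finite-range probability distribution on $\mathbb{Z}^d$ with $|\sum_u P_0(u)e^{i(\lambda,u)}|=1$ iff $\lambda=0$ and such that $1/\tilde p_0(\lambda)$ (with $\tilde p_0(\lambda)=\sum_u P_0(u)e^{i(\lambda,u)}$) has absolutely summable Fourier coefficients, and $c$ is an odd finite-range real function with $P_0(u)\pm\epsilon c(u)\in[0,1)$. Given $X_t=x,\xi_t=\bar\xi$, the values $\xi_{t+1}(y)$, $y\in\mathbb{Z}^d$, are independent with $P(\xi_{t+1}(y)=s)=Q_0(\bar\xi(y),s)$ if $y\ne x$ and $Q_1(\bar\xi(y),s)$ if $y=x$, where $Q_0,Q_1$ are symmetric $2\times2$ stochastic matrices, $Q_0$ has eigenvalues $1,\mu$ with $0<|\mu|<1$, and $Q_1-Q_0=O(\epsilon)$. The environment seen from the walk, $\eta_t(x)=\xi_t(X_t+x)$, is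 a Markov chain on $\Omega$ with stochastic operator $(\mathcal T f)(\bar\eta)=\mathcal E[f(\eta_{t+1})\mid\eta_t=\bar\eta]$. $\Pi_0$ is the product of uniform measures on $\{\pm1\}$. For finite $\Gamma\subset\mathbb{Z}^d$ let $\Phi_\Gamma(\eta)=\prod_{x\in\Gamma}\eta(x)$, $\Phi_\emptyset=1$; each $f\in L^2(\Omega,\Pi_0)$ is written $f=\sum_\Gamma f_\Gamma\Phi_\Gamma$. For a fixed $M>1$, $\mathcal H_M=\{f:\|f\|_M:=\sum_\Gamma|f_\Gamma|M^{|\Gamma|}<\infty\}$. Standing assumptions (valid for $\epsilon,|\mu|$ small): $\mathcal T$ maps $\mathcal H_M$ into itself; the chain $(\eta_t)$ has an invariant probability measure $\Pi$, absolutely continuous w.r.t. $\Pi_0$ with bounded density; there is $\bar\mu\in(0,1)$ with $\|\mathcal T f\|_M\le\bar\mu\|f\|_M$ for all $f\in\widehat{\mathcal H}_M:=\{f\in\mathcal H_M:\int f\,d\Pi=0\}$. The dynamics and $\Pi$ are invariant under the global spin flip $\eta\mapsto-\eta$. Path space notation: $\mathcal P_\Pi$ is the law of $(\eta_t)_{t\ge0}$ with $\eta_0\sim\Pi$. $\zeta_t:=\eta_t(0)$, $\widehat\zeta=(\zeta_t)_{t\ge0}\in\Omega_+:=\{\pm1\}^{\mathbb{Z}_+}$, and $\wp$ is the law of $\widehat\zeta$ under $\mathcal P_\Pi$ (a probability on $\Omega_+$ with its cylinder $\sigma$-algebra). $\mu_*:=M\sqrt{\bar\mu(1+2\bar\mu)}$.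 *)

theory Defs
  imports "HOL-Probability.Probability"
begin

text \<open>Sites of Z^d are vectors int^'d ('d a finite index type, d = CARD('d) >= 1).
  A configuration eta in Omega = {-1,+1}^(Z^d) is encoded as a map to bool,
  True standing for +1 and False for -1.\<close>

type_synonym 'd config = "(int ^ 'd) \<Rightarrow> bool"

definition spin :: "bool \<Rightarrow> real" where
  "spin b = (if b then 1 else -1)"

definition Omega_M :: "('d::finite) config measure" where
  "Omega_M = PiM UNIV (\<lambda>_. count_space UNIV)"

definition Pi0 :: "('d::finite) config measure" where
  "Pi0 = PiM UNIV (\<lambda>_. measure_pmf (pmf_of_set (UNIV :: bool set)))"

definition Phi :: "(int ^ 'd) set \<Rightarrow> ('d::finite) config \<Rightarrow> real" where
  "Phi \<Gamma> \<eta> = (\<Prod>x\<in>\<Gamma>. spin (\<eta> x))"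

definition walsh_coeff :: "(('d::finite) config \<Rightarrow> real) \<Rightarrow> (int ^ 'd) set \<Rightarrow> real" where
  "walsh_coeff f \<Gamma> = (\<integral>\<eta>. f \<eta> * Phi \<Gamma> \<eta> \<partial>Pi0)"

definition normM :: "real \<Rightarrow> (('d::finite) config \<Rightarrow> real) \<Rightarrow> ennreal" where
  "normM M f = (\<integral>\<^sup>+ \<Gamma>. ennreal (\<bar>walsh_coeff f \<Gamma>\<bar> * M ^ card \<Gamma>)
                  \<partial>count_space {\<Gamma> :: (int ^ 'd) set. finite \<Gamma>})"

definition HM :: "real \<Rightarrow> (('d::finite) config \<Rightarrow> real) set" where
  "HM M = {f. f \<in> borel_measurable Pi0 \<and> integrable Pi0 (\<lambda>\<eta>. (f \<eta>)\<^sup>2) \<and> normM M f < \<top>}"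

definition ptilde :: "((int ^ 'd) \<Rightarrow> real) \<Rightarrow> real ^ ('d::finite) \<Rightarrow> complex" where
  "ptilde P0 l = (\<Sum>u\<in>{u. P0 u \<noteq> 0}. complex_of_real (P0 u) * cis (\<Sum>i\<in>UNIV. l $ i * real_of_int (u $ i)))"

text \<open>Hypotheses on the walk: P_0 even finite-range probability, aperiodicity
  (|ptilde| = 1 on the torus only at 0), 1/ptilde in the Wiener algebra (absolutely summable
  Fourier coefficients a), c odd finite-range with P_0 +- eps c in [0,1), eps > 0.\<close>
definition walk_assumptions :: "((int ^ 'd) \<Rightarrow> real) \<Rightarrow> ((int ^ 'd) \<Rightarrow> real) \<Rightarrow> real \<Rightarrow> bool" where
  "walk_assumptions P0 c \<epsilon> \<longleftrightarrow>
     \<epsilon> > 0 \<and>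
     (\<forall>u. P0 u \<ge> 0) \<and> finite {u. P0 u \<noteq> 0} \<and> (\<Sum>u\<in>{u. P0 u \<noteq> 0}. P0 u) = 1 \<and>
     (\<forall>u. P0 (- u) = P0 u) \<and>
     (\<forall>l::real ^ ('d::finite). (\<forall>i. - pi < l $ i \<and> l $ i \<le> pi) \<longrightarrow>
          (cmod (ptilde P0 l) = 1 \<longleftrightarrow> l = 0)) \<and>
     (\<exists>a :: (int ^ 'd) \<Rightarrow> complex. (\<lambda>x. norm (a x)) summable_on UNIV \<and>
          (\<forall>l. ptilde P0 l * (\<Sum>\<^sub>\<infinity>x. a x * cis (\<Sum>i\<in>UNIV. l $ i * real_of_int (x $ i))) = 1)) \<and>
     finite {u. c u \<noteq> 0} \<and> (\<forall>u. c (- u) = - c u) \<and>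
     (\<forall>u. 0 \<le> P0 u + \<epsilon> * c u \<and> P0 u + \<epsilon> * c u < 1 \<and>
          0 \<le> P0 u - \<epsilon> * c u \<and> P0 u - \<epsilon> * c u < 1)"

definition sym_stoch :: "(bool \<Rightarrow> bool \<Rightarrow> real) \<Rightarrow> bool" where
  "sym_stoch Q \<longleftrightarrow> (\<forall>a b. 0 \<le> Q a b \<and> Q a b = Q b a) \<and> (\<forall>a. Q a True + Q a False = 1)"

text \<open>Second eigenvalue mu of a 2x2 stochastic matrix (eigenvalues 1 and trace - 1).\<close>
definition second_eig :: "(bool \<Rightarrow> bool \<Rightarrow> real) \<Rightarrow> real" where
  "second_eig Q = Q True True + Q False False - 1"

definition step_supp :: "((int ^ 'd) \<Rightarrow> real) \<Rightarrow> ((int ^ 'd) \<Rightarrow> real) \<Rightarrow> (int ^ 'd) set" where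
  "step_supp P0 c = {u. P0 u \<noteq> 0 \<or> c u \<noteq> 0}"

definition step_prob :: "((int ^ 'd) \<Rightarrow> real) \<Rightarrow> real \<Rightarrow> ((int ^ 'd) \<Rightarrow> real) \<Rightarrow> ('d::finite) config \<Rightarrow> (int ^ 'd) \<Rightarrow> real" where
  "step_prob P0 \<epsilon> c \<eta> u = P0 u + \<epsilon> * c u * spin (\<eta> 0)"

text \<open>Law of the updated environment (in coordinates relative to the old walker position):
  independent sites, Q_1 at the walker's site 0, Q_0 elsewhere.\<close>
definition env_meas :: "(bool \<Rightarrow> bool \<Rightarrow> real) \<Rightarrow> (bool \<Rightarrow> bool \<Rightarrow> real) \<Rightarrow> ('d::finite) config \<Rightarrow> 'd config measure" where
  "env_meas Q0 Q1 \<eta> = PiM UNIV (\<lambda>y. measure_pmf (bernoulli_pmf ((if y = 0 then Q1 else Q0) (\<eta> y) True)))"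

text \<open>Stochastic operator of the environment seen from the walk:
  (T f)(eta) = E[f(eta_{t+1}) | eta_t = eta], with eta_{t+1}(x) = xi_{t+1}(u + x).\<close>
definition Tmap :: "((int ^ 'd) \<Rightarrow> real) \<Rightarrow> ((int ^ 'd) \<Rightarrow> real) \<Rightarrow> real \<Rightarrow>
    (bool \<Rightarrow> bool \<Rightarrow> real) \<Rightarrow> (bool \<Rightarrow> bool \<Rightarrow> real) \<Rightarrow>
    (('d::finite) config \<Rightarrow> real) \<Rightarrow> 'd config \<Rightarrow> real" where
  "Tmap P0 c \<epsilon> Q0 Q1 f \<eta> =
     (\<Sum>u\<in>step_supp P0 c. step_prob P0 \<epsilon> c \<eta> u *
        (\<integral>\<xi>. f (\<lambda>x. \<xi> (u + x)) \<partial>env_meas Q0 Q1 \<eta>))"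

definition Omega_plus :: "(nat \<Rightarrow> bool) measure" where
  "Omega_plus = PiM UNIV (\<lambda>_. count_space UNIV)"

text \<open>cylf T [s_0,...,s_n] = g_{s_0} T(g_{s_1} T(... T(g_{s_n}))), g_s(eta) = 1[eta(0) = s];
  its Pi-integral is P_Pi(zeta_0 = s_0, ..., zeta_n = s_n) for the Markov chain with operator T.\<close>
primrec cylf :: "((('d::finite) config \<Rightarrow> real) \<Rightarrow> 'd config \<Rightarrow> real) \<Rightarrow> bool list \<Rightarrow> 'd config \<Rightarrow> real" where
  "cylf T [] = (\<lambda>_. 1)"
| "cylf T (b # bs) = (\<lambda>\<eta>. (if \<eta> 0 = b then 1 else 0) * T (cylf T bs) \<eta>)"

end

theory Submission
  imports Defs
begin

lemma env_prob:
  "measure (env_meas Q0 Q1 (\<eta>::('d::finite) config)) {\<xi>. \<xi> y = s}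
     = pmf (bernoulli_pmf ((if y = 0 then Q1 else Q0) (\<eta> y) True)) s"
proof -
  define Mf where "Mf = (\<lambda>y::int^'d. measure_pmf (bernoulli_pmf ((if y = 0 then Q1 else Q0) (\<eta> y) True)))"
  have E: "env_meas Q0 Q1 \<eta> = PiM UNIV Mf" by (simp add: env_meas_def Mf_def)
  have D: "distr (PiM UNIV Mf) (Mf y) (\<lambda>\<omega>. \<omega> y) = Mf y"
    by (rule distr_PiM_component) (auto simp: Mf_def prob_space_measure_pmf)
  have "measure (Mf y) {s} = measure (distr (PiM UNIV Mf) (Mf y) (\<lambda>\<omega>. \<omega> y)) {s}" using D by simp
  also have "\<dots> = measure (PiM UNIV Mf) ((\<lambda>\<omega>. \<omega> y) -` {s} \<inter> space (PiM UNIV Mf))"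
    by (rule measure_distr) (auto simp: Mf_def)
  also have "(\<lambda>\<omega>. \<omega> y) -` {s} \<inter> space (PiM UNIV Mf) = {\<xi>. \<xi> y = s}"
    by (auto simp: space_PiM Mf_def)
  finally show ?thesis by (simp add: E Mf_def measure_pmf_single)
qed

lemma env_sets: "{\<xi>. \<xi> y = s} \<in> sets (env_meas Q0 Q1 (\<eta>::('d::finite) config))"
proof -
  have "{\<xi>. \<xi> y = s} = {\<xi> \<in> space (env_meas Q0 Q1 \<eta>). \<xi> y \<in> {s}}"
    by (auto simp: env_meas_def space_PiM)
  also have "\<dots> \<in> sets (env_meas Q0 Q1 \<eta>)" unfolding env_meas_def
    by (rule sets_Collect_single') auto
  finally show ?thesis .
qed

lemma env_prob_space: "prob_space (env_meas Q0 Q1 \<eta>)"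
  unfolding env_meas_def by (rule prob_space_PiM) (auto simp: prob_space_measure_pmf)

lemma int_bound:
  assumes "prob_space N" "A \<in> sets N" "K \<ge> 0" "\<And>x. 0 \<le> F x" "\<And>x. F x \<le> K * indicator A x"
  shows "0 \<le> integral\<^sup>L N F \<and> integral\<^sup>L N F \<le> K * measure N A"
proof -
  interpret prob_space N by fact
  have "0 \<le> integral\<^sup>L N F" using assms(4) by (simp add: integral_nonneg_AE)
  moreover have "integral\<^sup>L N F \<le> K * measure N A"
  proof (cases "integrable N F")
    case True
    have "integrable N (indicator A :: _ \<Rightarrow> real)"
      using assms(2) by (intro integrable_real_indicator) (auto simp: less_top[symmetric])
    then have "integral\<^sup>L N F \<le> integral\<^sup>L N (\<lambda>x. K * indicator A x)"
      by (intro Bochner_Integration.integral_mono) (use True assms in auto)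
    also have "\<dots> = K * measure N A" using assms(2) by simp
    finally show ?thesis .
  next
    case False then show ?thesis using assms(3) by (simp add: not_integrable_integral_eq)
  qed
  ultimately show ?thesis by simp
qed

lemma int_bound_const:
  assumes "prob_space N" "\<And>x. 0 \<le> F x" "\<And>x. F x \<le> (K::real)"
  shows "integral\<^sup>L N F \<le> K"
proof (cases "integrable N F")
  case True
  interpret prob_space N by fact
  have "integral\<^sup>L N F \<le> integral\<^sup>L N (\<lambda>x. K)"
    by (intro Bochner_Integration.integral_mono) (use True assms in auto)
  then show ?thesis by (simp add: prob_space)
next
  case False then show ?thesis using assms(2)[of undefined] assms(3)[of undefined]
    by (simp add: not_integrable_integral_eq)
qed

lemma walk_facts:
  assumes walk: "walk_assumptions P0 c \<epsilon>"
  shows "finite (step_supp P0 c)" "\<And>\<eta> u. 0 \<le> step_prob P0 \<epsilon> c \<eta> u"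
    "\<And>\<eta>. (\<Sum>u\<in>step_supp P0 c. step_prob P0 \<epsilon> c \<eta> u) = 1"
    "c 0 = 0" "P0 0 < 1" "0 \<le> P0 0"
proof -
  note W = walk[unfolded walk_assumptions_def]
  have S: "step_supp P0 c = {u. P0 u \<noteq> 0} \<union> {u. c u \<noteq> 0}"
    by (auto simp: step_supp_def)
  show fin: "finite (step_supp P0 c)" using W S by simp
  show c0: "c 0 = 0" using W by (metis add.inverse_neutral equal_neg_zero)
  show "P0 0 < 1" using W c0 by (metis add.right_neutral mult_zero_right)
  show "0 \<le> P0 0" using W by auto
  show "0 \<le> step_prob P0 \<epsilon> c \<eta> u" for \<eta> u
    using W by (auto simp: step_prob_def spin_def)
  have sP: "(\<Sum>u\<in>step_supp P0 c. P0 u) = 1"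
  proof -
    have "(\<Sum>u\<in>step_supp P0 c. P0 u) = (\<Sum>u\<in>{u. P0 u \<noteq> 0}. P0 u)"
      by (rule sum.mono_neutral_right) (use fin in \<open>auto simp: step_supp_def\<close>)
    then show ?thesis using W by simp
  qed
  have sc: "(\<Sum>u\<in>step_supp P0 c. c u) = 0"
  proof -
    have sym: "uminus ` step_supp P0 c = step_supp P0 c"
    proof -
      have "- u \<in> step_supp P0 c" if "u \<in> step_supp P0 c" for u
        using that W by (auto simp: step_supp_def)
      then show ?thesis by (auto simp: image_iff) (metis minus_minus)
    qed
    have "(\<Sum>u\<in>step_supp P0 c. c u) = (\<Sum>u\<in>uminus ` step_supp P0 c. c u)" using sym by simp
    also have "\<dots> = (\<Sum>u\<in>step_supp P0 c. c (- u))"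
      by (subst sum.reindex) (auto simp: inj_on_def)
    also have "\<dots> = - (\<Sum>u\<in>step_supp P0 c. c u)" using W by (simp add: sum_negf)
    finally show ?thesis by simp
  qed
  show "(\<Sum>u\<in>step_supp P0 c. step_prob P0 \<epsilon> c \<eta> u) = 1" for \<eta>
    by (simp add: step_prob_def sum.distrib sP sum_distrib_left[symmetric]
        sum_distrib_right[symmetric] sc)
qed

lemma T_const:
  assumes walk: "walk_assumptions P0 c \<epsilon>"
    and h: "\<And>\<xi>. 0 \<le> h \<xi>" "\<And>\<xi>. h \<xi> \<le> (K::real)"
  shows "0 \<le> Tmap P0 c \<epsilon> Q0 Q1 h \<eta> \<and> Tmap P0 c \<epsilon> Q0 Q1 h \<eta> \<le> K"
proof -
  note WF = walk_facts[OF walk]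
  define I where "I u = (\<integral>\<xi>. h (\<lambda>x. \<xi> (u + x)) \<partial>env_meas Q0 Q1 \<eta>)" for u
  have I0: "0 \<le> I u" for u unfolding I_def using h by (simp add: integral_nonneg_AE)
  have IK: "I u \<le> K" for u unfolding I_def
    by (rule int_bound_const[OF env_prob_space]) (use h in auto)
  have "Tmap P0 c \<epsilon> Q0 Q1 h \<eta> = (\<Sum>u\<in>step_supp P0 c. step_prob P0 \<epsilon> c \<eta> u * I u)"
    by (simp add: Tmap_def I_def)
  moreover have "0 \<le> (\<Sum>u\<in>step_supp P0 c. step_prob P0 \<epsilon> c \<eta> u * I u)"
    using WF(2) I0 by (intro sum_nonneg) auto
  moreover have "(\<Sum>u\<in>step_supp P0 c. step_prob P0 \<epsilon> c \<eta> u * I u)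
      \<le> (\<Sum>u\<in>step_supp P0 c. step_prob P0 \<epsilon> c \<eta> u * K)"
    using WF(2) IK by (intro sum_mono mult_left_mono) auto
  moreover have "(\<Sum>u\<in>step_supp P0 c. step_prob P0 \<epsilon> c \<eta> u * K) = K"
    using WF(3) by (simp add: sum_distrib_right[symmetric])
  ultimately show ?thesis by linarith
qed

lemma T_step:
  assumes walk: "walk_assumptions P0 c \<epsilon>"
    and Q0s: "sym_stoch Q0" and m: "\<And>x y. Q0 x y \<le> m" "m \<le> 1"
    and K: "K \<ge> 0"
    and h: "\<And>\<xi>. 0 \<le> h \<xi>" "\<And>\<xi>. h \<xi> \<le> K * (if \<xi> 0 = s then 1 else 0)"
  shows "Tmap P0 c \<epsilon> Q0 Q1 h \<eta> \<le> K * (m + (1 - m) * P0 0)"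
proof -
  note WF = walk_facts[OF walk]
  define w where "w u = step_prob P0 \<epsilon> c \<eta> u" for u
  define I where "I u = (\<integral>\<xi>. h (\<lambda>x. \<xi> (u + x)) \<partial>env_meas Q0 Q1 \<eta>)" for u
  have Imeas: "I u \<le> K * measure (env_meas Q0 Q1 \<eta>) {\<xi>. \<xi> u = s}" for u
  proof -
    have "0 \<le> I u \<and> I u \<le> K * measure (env_meas Q0 Q1 \<eta>) {\<xi>. \<xi> u = s}"
      unfolding I_def
    proof (rule int_bound[OF env_prob_space env_sets K])
      fix \<xi> :: "'a config"
      show "0 \<le> h (\<lambda>x. \<xi> (u + x))" using h(1) .
      have "h (\<lambda>x. \<xi> (u + x)) \<le> K * (if \<xi> u = s then 1 else 0)"
        using h(2)[of "\<lambda>x. \<xi> (u + x)"] by simp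
      then show "h (\<lambda>x. \<xi> (u + x)) \<le> K * indicator {\<xi>. \<xi> u = s} \<xi>"
        by (cases "\<xi> u = s") (auto simp: indicator_def)
    qed
    then show ?thesis by simp
  qed
  have r: "measure (env_meas Q0 Q1 \<eta>) {\<xi>. \<xi> u = s} \<le> (if u = 0 then 1 else m)" for u
  proof (cases "u = 0")
    case True
    then show ?thesis using prob_space.prob_le_1[OF env_prob_space] by simp
  next
    case False
    have Q: "0 \<le> Q0 x y" "Q0 x True + Q0 x False = 1" for x y
      using Q0s by (auto simp: sym_stoch_def)
    have p01: "0 \<le> Q0 (\<eta> u) True" "Q0 (\<eta> u) True \<le> 1"
      using Q(1)[of "\<eta> u" True] Q(1)[of "\<eta> u" False] Q(2)[of "\<eta> u"] by auto
    have "measure (env_meas Q0 Q1 \<eta>) {\<xi>. \<xi> u = s} = Q0 (\<eta> u) s"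
      using False p01 Q(2)[of "\<eta> u"] env_prob[of Q0 Q1 \<eta> u s] by (cases s) auto
    then show ?thesis using False m(1) by simp
  qed
  have IK: "I u \<le> K * (m + (1 - m) * (if u = 0 then 1 else 0))" for u
  proof -
    have "I u \<le> K * (if u = 0 then 1 else m)"
      using Imeas[of u] mult_left_mono[OF r[of u] K] by linarith
    then show ?thesis by (cases "u = 0") auto
  qed
  have "Tmap P0 c \<epsilon> Q0 Q1 h \<eta> = (\<Sum>u\<in>step_supp P0 c. w u * I u)"
    by (simp add: Tmap_def I_def w_def)
  also have "\<dots> \<le> (\<Sum>u\<in>step_supp P0 c. w u * (K * (m + (1 - m) * (if u = 0 then 1 else 0))))"
    using WF(2) IK unfolding w_def by (intro sum_mono mult_left_mono) auto
  also have "\<dots> = K * m * (\<Sum>u\<in>step_supp P0 c. w u)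
       + K * (1 - m) * (\<Sum>u\<in>step_supp P0 c. (if u = 0 then w u else 0))"
  proof -
    have "w u * (K * (m + (1 - m) * (if u = 0 then 1 else 0)))
        = K * m * w u + K * (1 - m) * (if u = 0 then w u else 0)" for u
      by (cases "u = 0") (auto simp: algebra_simps)
    then show ?thesis by (simp add: sum.distrib sum_distrib_left)
  qed
  also have "(\<Sum>u\<in>step_supp P0 c. w u) = 1" using WF(3) by (simp add: w_def)
  also have "(\<Sum>u\<in>step_supp P0 c. (if u = 0 then w u else 0)) \<le> P0 0"
  proof -
    have "(\<Sum>u\<in>step_supp P0 c. (if u = 0 then w u else 0)) = (if 0 \<in> step_supp P0 c then w 0 else 0)"
      using WF(1) by (simp add: sum.delta)
    moreover have "w 0 = P0 0" using WF(4) by (simp add: w_def step_prob_def)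
    ultimately show ?thesis using WF(6) by simp
  qed
  then have "K * (1 - m) * (\<Sum>u\<in>step_supp P0 c. (if u = 0 then w u else 0)) \<le> K * (1 - m) * P0 0"
    using K m(2) by (intro mult_left_mono) auto
  finally show ?thesis by (simp add: algebra_simps)
qed

lemma cylf_bound:
  assumes walk: "walk_assumptions P0 c \<epsilon>"
    and Q0s: "sym_stoch Q0" and m: "\<And>x y. Q0 x y \<le> m" "m \<le> 1"
    and th: "\<theta> = m + (1 - m) * P0 0" "0 \<le> \<theta>"
  shows "\<forall>\<eta>. 0 \<le> cylf (Tmap P0 c \<epsilon> Q0 Q1) (b # bs) \<eta> \<and>
          cylf (Tmap P0 c \<epsilon> Q0 Q1) (b # bs) \<eta> \<le> \<theta> ^ length bs * (if \<eta> 0 = b then 1 else 0)"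
proof (induction bs arbitrary: b)
  case Nil
  show ?case
  proof
    fix \<eta> :: "'a config"
    have "0 \<le> Tmap P0 c \<epsilon> Q0 Q1 (\<lambda>_. 1) \<eta> \<and> Tmap P0 c \<epsilon> Q0 Q1 (\<lambda>_. 1) \<eta> \<le> 1"
      by (rule T_const[OF walk]) auto
    then show "0 \<le> cylf (Tmap P0 c \<epsilon> Q0 Q1) [b] \<eta> \<and>
          cylf (Tmap P0 c \<epsilon> Q0 Q1) [b] \<eta> \<le> \<theta> ^ length [] * (if \<eta> 0 = b then 1 else 0)"
      by auto
  qed
next
  case (Cons b' bs)
  show ?case
  proof
    fix \<eta> :: "'a config"
    let ?h = "cylf (Tmap P0 c \<epsilon> Q0 Q1) (b' # bs)"
    have h0: "\<And>\<xi>. 0 \<le> ?h \<xi>" and h1: "\<And>\<xi>. ?h \<xi> \<le> \<theta> ^ length bs * (if \<xi> 0 = b' then 1 else 0)"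
      using Cons.IH[of b'] by auto
    have tn: "0 \<le> \<theta> ^ length bs" using th(2) by simp
    have h2: "?h \<xi> \<le> \<theta> ^ length bs" for \<xi>
      using h1[of \<xi>] tn by (cases "\<xi> 0 = b'") auto
    have "0 \<le> Tmap P0 c \<epsilon> Q0 Q1 ?h \<eta> \<and> Tmap P0 c \<epsilon> Q0 Q1 ?h \<eta> \<le> \<theta> ^ length bs"
      by (rule T_const[OF walk]) (rule h0, rule h2)
    then have A: "0 \<le> Tmap P0 c \<epsilon> Q0 Q1 ?h \<eta>" by simp
    have B: "Tmap P0 c \<epsilon> Q0 Q1 ?h \<eta> \<le> \<theta> ^ length bs * (m + (1 - m) * P0 0)"
      by (rule T_step[OF walk Q0s m tn, where h="?h" and s=b']) (rule h0, rule h1)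
    then have B': "Tmap P0 c \<epsilon> Q0 Q1 ?h \<eta> \<le> \<theta> ^ length (b' # bs)"
      using th(1) by (simp add: mult.commute)
    show "0 \<le> cylf (Tmap P0 c \<epsilon> Q0 Q1) (b # b' # bs) \<eta> \<and>
          cylf (Tmap P0 c \<epsilon> Q0 Q1) (b # b' # bs) \<eta> \<le> \<theta> ^ length (b' # bs) * (if \<eta> 0 = b then 1 else 0)"
      using A B' by auto
  qed
qed

theorem lemma2:
  fixes P0 c :: "(int ^ ('d::finite)) \<Rightarrow> real" and \<epsilon> :: real
    and Q0 Q1 :: "bool \<Rightarrow> bool \<Rightarrow> real"
    and M \<mu>bar :: real
    and PiI :: "'d config measure"
    and wp :: "(nat \<Rightarrow> bool) measure"
  assumes walk: "walk_assumptions P0 c \<epsilon>"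
    and Q0: "sym_stoch Q0" "0 < \<bar>second_eig Q0\<bar>" "\<bar>second_eig Q0\<bar> < 1"
    and Q1: "sym_stoch Q1"
    and M: "M > 1"
    and T_HM: "\<forall>f \<in> HM M. Tmap P0 c \<epsilon> Q0 Q1 f \<in> HM M"
    and Pi_prob: "prob_space PiI"
    and Pi_dens: "\<exists>\<rho> C. \<rho> \<in> borel_measurable Pi0 \<and> (\<forall>\<eta>. 0 \<le> \<rho> \<eta> \<and> \<rho> \<eta> \<le> C) \<and>
                        PiI = density Pi0 (\<lambda>\<eta>. ennreal (\<rho> \<eta>))"
    and Pi_inv: "\<forall>A \<in> sets (Omega_M :: 'd config measure).
                   (\<integral>\<eta>. Tmap P0 c \<epsilon> Q0 Q1 (indicator A :: 'd config \<Rightarrow> real) \<eta> \<partial>PiI) = measure PiI A"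
    and mubar: "0 < \<mu>bar" "\<mu>bar < 1"
    and contr: "\<forall>f \<in> HM M. (\<integral>\<eta>. f \<eta> \<partial>PiI) = 0 \<longrightarrow>
                   normM M (Tmap P0 c \<epsilon> Q0 Q1 f) \<le> ennreal \<mu>bar * normM M f"
    and mustar: "M * sqrt (\<mu>bar * (1 + 2 * \<mu>bar)) < 1"
    and wp_prob: "prob_space wp" "sets wp = sets Omega_plus"
    and wp_law: "\<forall>bs. measure wp {\<zeta> \<in> space Omega_plus. \<forall>i < length bs. \<zeta> i = bs ! i}
                        = (\<integral>\<eta>. cylf (Tmap P0 c \<epsilon> Q0 Q1) bs \<eta> \<partial>PiI)"
  shows "\<forall>z. emeasure wp {z} = 0"
proof
  fix z :: "nat \<Rightarrow> bool"
  interpret wp: prob_space wp by (rule wp_prob(1))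
  note Qs = Q0(1)[unfolded sym_stoch_def]
  define m where "m = max (max (Q0 True True) (Q0 True False)) (max (Q0 False True) (Q0 False False))"
  have mle: "Q0 x y \<le> m" for x y by (cases x; cases y) (auto simp: m_def)
  have QTF: "Q0 True False = Q0 False True" using Qs by auto
  have sums: "Q0 True True + Q0 True False = 1" "Q0 False True + Q0 False False = 1" using Qs by auto
  have nn: "0 \<le> Q0 x y" for x y using Qs by auto
  have e2: "\<bar>Q0 True True + Q0 False False - 1\<bar> < 1" using Q0(3) by (simp add: second_eig_def)
  have m1: "m < 1" unfolding m_def using QTF sums nn[of True True] nn[of False False] e2
    by (auto simp: abs_if split: if_splits)
  have m0: "0 \<le> m" using mle[of True True] nn[of True True] by linarith
  note WF = walk_facts[OF walk]
  define \<theta> where "\<theta> = m + (1 - m) * P0 0"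
  have th0: "0 \<le> \<theta>" unfolding \<theta>_def using m0 m1 WF(6) by simp
  have th1: "\<theta> < 1"
  proof -
    have "(1 - m) * P0 0 < (1 - m) * 1" using m1 WF(5) by (intro mult_strict_left_mono) auto
    then show ?thesis unfolding \<theta>_def by simp
  qed
  have bound: "emeasure wp {z} \<le> ennreal (\<theta> ^ n)" for n
  proof -
    define bs where "bs = map z [0..<Suc n]"
    have bs_eq: "bs = z 0 # map z [1..<Suc n]" unfolding bs_def by (simp add: upt_conv_Cons map_Suc_upt[symmetric] del: upt_Suc)
    define cyl where "cyl = {\<zeta> \<in> space Omega_plus. \<forall>i < length bs. \<zeta> i = bs ! i}"
    have cyl_sets: "cyl \<in> sets wp" unfolding cyl_def wp_prob(2) Omega_plus_def by measurable
    have sub: "{z} \<subseteq> cyl" by (auto simp: cyl_def bs_def space_PiM Omega_plus_def nth_map simp del: upt_Suc)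
    have cb: "\<forall>\<eta>. 0 \<le> cylf (Tmap P0 c \<epsilon> Q0 Q1) (z 0 # map z [1..<Suc n]) \<eta> \<and>
          cylf (Tmap P0 c \<epsilon> Q0 Q1) (z 0 # map z [1..<Suc n]) \<eta>
            \<le> \<theta> ^ length (map z [1..<Suc n]) * (if \<eta> 0 = z 0 then 1 else 0)"
      by (rule cylf_bound[OF walk Q0(1) mle less_imp_le[OF m1] \<theta>_def th0])
    have "(\<integral>\<eta>. cylf (Tmap P0 c \<epsilon> Q0 Q1) bs \<eta> \<partial>PiI) \<le> \<theta> ^ n"
    proof (rule int_bound_const[OF Pi_prob])
      fix \<eta>
      have c1: "0 \<le> cylf (Tmap P0 c \<epsilon> Q0 Q1) bs \<eta> \<and>
         cylf (Tmap P0 c \<epsilon> Q0 Q1) bs \<eta> \<le> \<theta> ^ n * (if \<eta> 0 = z 0 then 1 else 0)"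
        using cb[rule_format, of \<eta>] unfolding bs_eq[symmetric] by (simp del: upt_Suc)
      show "0 \<le> cylf (Tmap P0 c \<epsilon> Q0 Q1) bs \<eta>" using c1 by simp
      have "cylf (Tmap P0 c \<epsilon> Q0 Q1) bs \<eta> \<le> \<theta> ^ n * (if \<eta> 0 = z 0 then 1 else 0)"
        using c1 by simp
      also have "\<dots> \<le> \<theta> ^ n" using th0 by simp
      finally show "cylf (Tmap P0 c \<epsilon> Q0 Q1) bs \<eta> \<le> \<theta> ^ n" .
    qed
    then have "measure wp cyl \<le> \<theta> ^ n" using wp_law cyl_def by simp
    have "emeasure wp {z} \<le> emeasure wp cyl" by (rule emeasure_mono[OF sub cyl_sets])
    also have "\<dots> = ennreal (measure wp cyl)" by (rule wp.emeasure_eq_measure)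
    also have "\<dots> \<le> ennreal (\<theta> ^ n)" using \<open>measure wp cyl \<le> \<theta> ^ n\<close> by (rule ennreal_leI)
    finally show ?thesis .
  qed
  have fin: "emeasure wp {z} \<noteq> \<top>"
    using bound[of 0] by (auto simp: top_unique)
  obtain r where r: "emeasure wp {z} = ennreal r" "0 \<le> r"
    using fin by (cases "emeasure wp {z}") auto
  have rle: "r \<le> \<theta> ^ n" for n
    using bound[of n] r th0 by (simp add: ennreal_le_iff)
  have lim: "(\<lambda>n. \<theta> ^ n) \<longlonglongrightarrow> 0" using th0 th1 by (intro LIMSEQ_power_zero) auto
  have "r \<le> 0" by (rule LIMSEQ_le_const[OF lim]) (use rle in auto)
  then show "emeasure wp {z} = 0" using r by simp
qed

end
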